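(* Let $n\ge2$ and consider an equation $\sum_{i,j=1}^n f_{ij}({\bf p})u_{x_ix_j}=0$, $p^i=u_{x_i}$, with $(f_{ij})$ symmetric and nondegenerate, with inverse $(f^{ij})$. Define $$s_k=\frac{f^{ij}}{(n+2)(1-n)}\left(\partial_kf_{ij}-n\,\partial_jf_{ik}\right),\qquad c_k=\frac{f^{ij}}{(n+2)(n-1)}\left((n+3)\partial_kf_{ij}-2(n+1)\partial_jf_{ik}\right),$$ $$a_{ijk}=\partial_kf_{ij}-(c_k+2s_k)f_{ij}-s_if_{kj}-s_jf_{ki},$$ where $\partial_k=\partial/\partial p^k$ and repeated indices are summed. The equation is Lagrangian if and only if (1) the tensor $a_{ijk}$ is totally symmetric (equivalently $a_{ijk}=a_{ikj}$), and (2) the covector $s_i$ is a gradient, i.e. $\partial_js_i=\partial_is_j$.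
   Context: The equation is called Lagrangian if there exist a function $g({\bf p})$ such that $(f_{ij})$ is proportional (by a nonvanishing function of ${\bf p}$) to the Hessian matrix $(\partial^2g/\partial p^i\partial p^j)$, i.e. the equation is (up to a factor) the Euler–Lagrange equation of the functional $\int g(u_{x_1},\dots,u_{x_n})\,d{\bf x}$. *)

theory Defs
  imports "HOL-Analysis.Analysis"
begin

definition pd :: "'n::finite \<Rightarrow> (real^'n \<Rightarrow> real) \<Rightarrow> real^'n \<Rightarrow> real" where
  "pd k h p = deriv (\<lambda>t. h (p + t *\<^sub>R axis k 1)) 0"

fun iter_pd :: "'n::finite list \<Rightarrow> (real^'n \<Rightarrow> real) \<Rightarrow> real^'n \<Rightarrow> real" where
  "iter_pd [] h = h"
| "iter_pd (k # ks) h = pd k (iter_pd ks h)"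

definition smooth_on :: "(real^'n::finite) set \<Rightarrow> (real^'n \<Rightarrow> real) \<Rightarrow> bool" where
  "smooth_on U h \<longleftrightarrow> (\<forall>ks. iter_pd ks h differentiable_on U)"

definition fco :: "(real^'n \<Rightarrow> real^'n^'n) \<Rightarrow> 'n::finite \<Rightarrow> 'n \<Rightarrow> real^'n \<Rightarrow> real" where
  "fco F i j p = F p $ i $ j"

definition finv :: "(real^'n \<Rightarrow> real^'n^'n) \<Rightarrow> 'n::finite \<Rightarrow> 'n \<Rightarrow> real^'n \<Rightarrow> real" where
  "finv F i j p = matrix_inv (F p) $ i $ j"

definition s_cov :: "(real^'n \<Rightarrow> real^'n^'n) \<Rightarrow> 'n::finite \<Rightarrow> real^'n \<Rightarrow> real" where
  "s_cov F k p = (\<Sum>i\<in>UNIV. \<Sum>j\<in>UNIV.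
     finv F i j p / ((real CARD('n) + 2) * (1 - real CARD('n))) *
     (pd k (fco F i j) p - real CARD('n) * pd j (fco F i k) p))"

definition c_cov :: "(real^'n \<Rightarrow> real^'n^'n) \<Rightarrow> 'n::finite \<Rightarrow> real^'n \<Rightarrow> real" where
  "c_cov F k p = (\<Sum>i\<in>UNIV. \<Sum>j\<in>UNIV.
     finv F i j p / ((real CARD('n) + 2) * (real CARD('n) - 1)) *
     ((real CARD('n) + 3) * pd k (fco F i j) p
       - 2 * (real CARD('n) + 1) * pd j (fco F i k) p))"

definition a_ten :: "(real^'n \<Rightarrow> real^'n^'n) \<Rightarrow> 'n::finite \<Rightarrow> 'n \<Rightarrow> 'n \<Rightarrow> real^'n \<Rightarrow> real" where
  "a_ten F i j k p = pd k (fco F i j) p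
     - (c_cov F k p + 2 * s_cov F k p) * fco F i j p
     - s_cov F i p * fco F k j p - s_cov F j p * fco F k i p"

text \<open>The equation sum f_ij(p) u_{x_i x_j} = 0 is Lagrangian on V: f is proportional,
  by a nonvanishing function of p, to the Hessian of some (smooth) g.\<close>
definition lagrangian_on :: "(real^'n::finite) set \<Rightarrow> (real^'n \<Rightarrow> real^'n^'n) \<Rightarrow> bool" where
  "lagrangian_on V F \<longleftrightarrow> (\<exists>g \<phi>. smooth_on V g \<and> (\<forall>p\<in>V. \<phi> p \<noteq> 0) \<and>
     (\<forall>p\<in>V. \<forall>i j. fco F i j p = \<phi> p * pd i (pd j g) p))"

end

theory Submission
  imports Defs
begin


lemma pd_has_derivative:
  assumes "(h has_derivative D) (at p)"
  shows "pd k h p = D (axis k 1)"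
proof -
  have lin: "linear D" using assms has_derivative_linear by blast
  have d1: "((\<lambda>t::real. p + t *\<^sub>R axis k 1) has_derivative (\<lambda>t. t *\<^sub>R axis k 1)) (at 0)"
    by (auto intro!: derivative_eq_intros)
  have d2: "(h has_derivative D) (at (p + 0 *\<^sub>R axis k 1))" using assms by simp
  have "((\<lambda>t. h (p + t *\<^sub>R axis k 1)) has_derivative (\<lambda>t. D (t *\<^sub>R axis k 1))) (at 0)"
    using has_derivative_compose[OF d1 d2] by (simp add: o_def)
  moreover have "(\<lambda>t. D (t *\<^sub>R axis k 1)) = (*) (D (axis k 1))"
    by (rule ext) (simp add: linear_scale[OF lin])
  ultimately have "((\<lambda>t. h (p + t *\<^sub>R axis k 1)) has_real_derivative D (axis k 1)) (at 0)"
    unfolding has_field_derivative_def by simp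
  then show ?thesis by (simp add: pd_def DERIV_imp_deriv)
qed

lemma pd_local:
  assumes "open W" "p \<in> W" "\<And>q. q \<in> W \<Longrightarrow> h q = h' q"
  shows "pd k h p = pd k h' p"
proof -
  let ?g = "\<lambda>t::real. p + t *\<^sub>R axis k 1"
  have cont: "continuous (at x) ?g" for x by (intro continuous_intros)
  have op: "open (?g -` W)" using continuous_open_vimage[OF assms(1) cont] by blast
  have ev: "\<forall>\<^sub>F t in nhds 0. h (?g t) = h' (?g t)"
    unfolding eventually_nhds
    by (rule exI[of _ "?g -` W"]) (use assms op in auto)
  show ?thesis unfolding pd_def by (rule deriv_cong_ev[OF ev refl])
qed

lemma iter_pd_local:
  assumes "open W" "\<And>q. q \<in> W \<Longrightarrow> h q = h' q" "q \<in> W"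
  shows "iter_pd ks h q = iter_pd ks h' q"
  using assms(3)
proof (induction ks arbitrary: q)
  case Nil then show ?case using assms(2) by simp
next
  case (Cons k ks)
  have "pd k (iter_pd ks h) q = pd k (iter_pd ks h') q"
    by (rule pd_local[OF assms(1) Cons.prems]) (rule Cons.IH)
  then show ?case by simp
qed

lemma iter_pd_append: "iter_pd (ks @ [k]) h = iter_pd ks (pd k h)"
  by (induction ks) auto

lemma smooth_pd: "smooth_on U h \<Longrightarrow> smooth_on U (pd k h)"
  unfolding smooth_on_def by (simp add: iter_pd_append[symmetric])

lemma smooth_diff: "smooth_on U h \<Longrightarrow> h differentiable_on U"
  unfolding smooth_on_def by (drule spec[of _ "[]"]) simp

lemma smooth_diff_at: "open U \<Longrightarrow> smooth_on U h \<Longrightarrow> p \<in> U \<Longrightarrow> h differentiable (at p)"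
  using smooth_diff differentiable_on_eq_differentiable_at by blast

lemma diff_on_cong:
  assumes "open U" "\<And>q. q \<in> U \<Longrightarrow> h q = h' q" "h differentiable_on U"
  shows "h' differentiable_on U"
  unfolding differentiable_on_eq_differentiable_at[OF assms(1)] differentiable_def
proof
  fix x assume x: "x \<in> U"
  then obtain D where "(h has_derivative D) (at x)"
    using assms(3) unfolding differentiable_on_eq_differentiable_at[OF assms(1)] differentiable_def by blast
  then have "(h' has_derivative D) (at x)"
    by (rule has_derivative_transform_within_open[OF _ assms(1) x]) (simp add: assms(2))
  then show "\<exists>D. (h' has_derivative D) (at x)" by blast
qed

lemma smooth_cong:
  assumes "open U" "\<And>q. q \<in> U \<Longrightarrow> h q = h' q" "smooth_on U h"
  shows "smooth_on U h'"
  unfolding smooth_on_def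
proof
  fix ks
  show "iter_pd ks h' differentiable_on U"
  proof (rule diff_on_cong[OF assms(1), of "iter_pd ks h"])
    show "iter_pd ks h differentiable_on U" using assms(3) by (simp add: smooth_on_def)
    show "iter_pd ks h q = iter_pd ks h' q" if "q \<in> U" for q
      by (rule iter_pd_local[OF assms(1)]) (use assms(2) that in auto)
  qed
qed

lemma smooth_subset: "smooth_on U h \<Longrightarrow> V \<subseteq> U \<Longrightarrow> smooth_on V h"
  unfolding smooth_on_def by (meson differentiable_on_subset)

lemma smooth_class:
  assumes U: "open U" and K1: "\<And>h. h \<in> K \<Longrightarrow> h differentiable_on U"
    and K2: "\<And>h k. h \<in> K \<Longrightarrow> \<exists>h'\<in>K. \<forall>q\<in>U. pd k h q = h' q" and h: "h \<in> K"
  shows "smooth_on U h"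
proof -
  have H: "\<forall>h\<in>K. \<exists>h'\<in>K. \<forall>q\<in>U. iter_pd ks h q = h' q" for ks
  proof (induction ks)
    case Nil then show ?case by auto
  next
    case (Cons k ks)
    show ?case
    proof
      fix h0 assume "h0 \<in> K"
      with Cons obtain h1 where h1: "h1 \<in> K" "\<forall>q\<in>U. iter_pd ks h0 q = h1 q" by blast
      then obtain h2 where h2: "h2 \<in> K" "\<forall>q\<in>U. pd k h1 q = h2 q" using K2 by blast
      have "\<forall>q\<in>U. iter_pd (k#ks) h0 q = h2 q"
        using h1 h2 pd_local[OF U, of _ "iter_pd ks h0" h1 k] by auto
      then show "\<exists>h'\<in>K. \<forall>q\<in>U. iter_pd (k # ks) h0 q = h' q" using h2 by blast
    qed
  qed
  show ?thesis unfolding smooth_on_def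
  proof
    fix ks
    obtain h' where "h' \<in> K" "\<forall>q\<in>U. iter_pd ks h q = h' q" using h H by blast
    then show "iter_pd ks h differentiable_on U"
      using diff_on_cong[OF U, of h' "iter_pd ks h"] K1 by auto
  qed
qed


lemma pd_add:
  assumes "a differentiable (at p)" "b differentiable (at p)"
  shows "pd k (\<lambda>q. a q + b q) p = pd k a p + pd k b p"
proof -
  obtain Da Db where a: "(a has_derivative Da) (at p)" and b: "(b has_derivative Db) (at p)"
    using assms unfolding differentiable_def by blast
  have "((\<lambda>q. a q + b q) has_derivative (\<lambda>x. Da x + Db x)) (at p)"
    using has_derivative_add[OF a b] .
  then show ?thesis using pd_has_derivative a b by metis
qed

lemma pd_mult:
  assumes "a differentiable (at p)" "b differentiable (at p)"
  shows "pd k (\<lambda>q. a q * b q) p = pd k a p * b p + a p * pd k b p"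
proof -
  obtain Da Db where a: "(a has_derivative Da) (at p)" and b: "(b has_derivative Db) (at p)"
    using assms unfolding differentiable_def by blast
  have "((\<lambda>q. a q * b q) has_derivative (\<lambda>x. a p * Db x + Da x * b p)) (at p)"
    using has_derivative_mult[OF a b] .
  then have "pd k (\<lambda>q. a q * b q) p = a p * Db (axis k 1) + Da (axis k 1) * b p"
    by (rule pd_has_derivative)
  then show ?thesis using pd_has_derivative[OF a] pd_has_derivative[OF b] by simp
qed

lemma pd_const: "pd k (\<lambda>q. c) p = 0"
  by (simp add: pd_def)

lemma pd_inverse:
  assumes "a differentiable (at p)" "a p \<noteq> 0"
  shows "pd k (\<lambda>q. inverse (a q)) p = - (inverse (a p) * pd k a p * inverse (a p))"
proof -
  obtain Da where a: "(a has_derivative Da) (at p)"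
    using assms unfolding differentiable_def by blast
  have "((\<lambda>q. inverse (a q)) has_derivative (\<lambda>h. - (inverse (a p) * Da h * inverse (a p)))) (at p)"
    using Deriv.has_derivative_inverse[OF assms(2) a] .
  then show ?thesis using pd_has_derivative[OF a] pd_has_derivative by metis
qed

lemma pd_exp:
  assumes "a differentiable (at p)"
  shows "pd k (\<lambda>q. exp (a q)) p = exp (a p) * pd k a p"
proof -
  obtain Da where a: "(a has_derivative Da) (at p)"
    using assms unfolding differentiable_def by blast
  have "((\<lambda>q. exp (a q)) has_derivative (\<lambda>h. exp (a p) * Da h)) (at p)"
    using a by (auto intro!: derivative_eq_intros)
  then show ?thesis using pd_has_derivative[OF a] pd_has_derivative by metis
qed

inductive alg :: "(real^'n::finite) set \<Rightarrow> (real^'n \<Rightarrow> real) \<Rightarrow> bool" for U where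
  base: "smooth_on U h \<Longrightarrow> alg U h"
| const: "alg U (\<lambda>p. c)"
| add: "alg U a \<Longrightarrow> alg U b \<Longrightarrow> alg U (\<lambda>p. a p + b p)"
| mult: "alg U a \<Longrightarrow> alg U b \<Longrightarrow> alg U (\<lambda>p. a p * b p)"
| inv: "alg U a \<Longrightarrow> (\<forall>p\<in>U. a p \<noteq> 0) \<Longrightarrow> alg U (\<lambda>p. inverse (a p))"
| exp: "alg U a \<Longrightarrow> alg U (\<lambda>p. exp (a p))"

lemma alg_diff:
  assumes U: "open U" shows "alg U h \<Longrightarrow> p \<in> U \<Longrightarrow> h differentiable (at p)"
proof (induction arbitrary: p rule: alg.induct)
  case (base h) then show ?case using smooth_diff_at[OF U] by blast
next
  case (const c) then show ?case by simp
next
  case (add a b) then show ?case by (simp add: differentiable_add)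
next
  case (mult a b) then show ?case by (simp add: differentiable_mult)
next
  case (inv a) then show ?case
    unfolding differentiable_def using Deriv.has_derivative_inverse by blast
next
  case (exp a) then show ?case
    unfolding differentiable_def by (auto intro!: derivative_eq_intros)
qed

lemma alg_pd:
  assumes U: "open U" shows "alg U h \<Longrightarrow> \<exists>h'. alg U h' \<and> (\<forall>p\<in>U. pd k h p = h' p)"
proof (induction rule: alg.induct)
  case (base h) then show ?case using smooth_pd alg.base by blast
next
  case (const c) then show ?case using pd_const alg.const by blast
next
  case (add a b)
  then obtain a' b' where ab: "alg U a'" "alg U b'" "\<forall>p\<in>U. pd k a p = a' p" "\<forall>p\<in>U. pd k b p = b' p"
    by blast
  have "pd k (\<lambda>q. a q + b q) p = a' p + b' p" if "p \<in> U" for p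
    using pd_add[OF alg_diff[OF U add.hyps(1) that] alg_diff[OF U add.hyps(2) that]] ab that by simp
  then show ?case using ab by (intro exI[of _ "\<lambda>p. a' p + b' p"]) (auto intro: alg.add)
next
  case (mult a b)
  then obtain a' b' where ab: "alg U a'" "alg U b'" "\<forall>p\<in>U. pd k a p = a' p" "\<forall>p\<in>U. pd k b p = b' p"
    by blast
  have "pd k (\<lambda>q. a q * b q) p = a' p * b p + a p * b' p" if "p \<in> U" for p
    using pd_mult[OF alg_diff[OF U mult.hyps(1) that] alg_diff[OF U mult.hyps(2) that]] ab that by simp
  then show ?case using ab mult.hyps
    by (intro exI[of _ "\<lambda>p. a' p * b p + a p * b' p"]) (auto intro: alg.add alg.mult)
next
  case (inv a)
  then obtain a' where ab: "alg U a'" "\<forall>p\<in>U. pd k a p = a' p"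
    by blast
  have "pd k (\<lambda>q. inverse (a q)) p = (-1) * (inverse (a p) * a' p * inverse (a p))" if "p \<in> U" for p
    using pd_inverse[OF alg_diff[OF U inv.hyps(1) that]] inv.hyps ab that by simp
  moreover have "alg U (\<lambda>p. (-1) * (inverse (a p) * a' p * inverse (a p)))"
    using ab inv.hyps by (intro alg.mult alg.inv alg.const) auto
  ultimately show ?case by blast
next
  case (exp a)
  then obtain a' where ab: "alg U a'" "\<forall>p\<in>U. pd k a p = a' p"
    by blast
  have "pd k (\<lambda>q. exp (a q)) p = exp (a p) * a' p" if "p \<in> U" for p
    using pd_exp[OF alg_diff[OF U exp.hyps(1) that]] ab that by simp
  then show ?case using ab exp.hyps
    by (intro exI[of _ "\<lambda>p. exp (a p) * a' p"]) (auto intro!: alg.mult alg.exp)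
qed

lemma alg_smooth:
  assumes U: "open U" and "alg U h" shows "smooth_on U h"
proof (rule smooth_class[OF U, of "Collect (alg U)"])
  show "g differentiable_on U" if "g \<in> Collect (alg U)" for g
    using alg_diff[OF U] that differentiable_on_eq_differentiable_at[OF U] by blast
  show "\<exists>h'\<in>Collect (alg U). \<forall>q\<in>U. pd k g q = h' q" if "g \<in> Collect (alg U)" for g k
    using alg_pd[OF U] that by blast
qed (use assms in auto)

lemma smooth_add: "open U \<Longrightarrow> smooth_on U a \<Longrightarrow> smooth_on U b \<Longrightarrow> smooth_on U (\<lambda>p. a p + b p)"
  by (rule alg_smooth) (auto intro: alg.intros)
lemma smooth_mult: "open U \<Longrightarrow> smooth_on U a \<Longrightarrow> smooth_on U b \<Longrightarrow> smooth_on U (\<lambda>p. a p * b p)"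
  by (rule alg_smooth) (auto intro: alg.intros)
lemma smooth_const: "open U \<Longrightarrow> smooth_on U (\<lambda>p. c)"
  by (rule alg_smooth) (auto intro: alg.intros)
lemma smooth_inverse: "open U \<Longrightarrow> smooth_on U a \<Longrightarrow> (\<forall>p\<in>U. a p \<noteq> 0) \<Longrightarrow> smooth_on U (\<lambda>p. inverse (a p))"
  by (rule alg_smooth) (auto intro: alg.intros)
lemma smooth_exp: "open U \<Longrightarrow> smooth_on U a \<Longrightarrow> smooth_on U (\<lambda>p. exp (a p))"
  by (rule alg_smooth) (auto intro: alg.intros)
lemma smooth_cmult: "open U \<Longrightarrow> smooth_on U a \<Longrightarrow> smooth_on U (\<lambda>p. c * a p)"
  by (rule alg_smooth) (auto intro: alg.intros)
lemma smooth_minus: "open U \<Longrightarrow> smooth_on U a \<Longrightarrow> smooth_on U b \<Longrightarrow> smooth_on U (\<lambda>p. a p - b p)"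
proof -
  assume U: "open U" and a: "smooth_on U a" and b: "smooth_on U b"
  have "alg U (\<lambda>p. a p + (-1) * b p)" by (intro alg.add alg.mult alg.const alg.base a b)
  then have "smooth_on U (\<lambda>p. a p + (-1) * b p)" by (rule alg_smooth[OF U])
  moreover have "(\<lambda>p. a p + (-1) * b p) = (\<lambda>p. a p - b p)" by auto
  ultimately show ?thesis by simp
qed
lemma smooth_divide: "open U \<Longrightarrow> smooth_on U a \<Longrightarrow> smooth_on U b \<Longrightarrow> (\<forall>p\<in>U. b p \<noteq> 0) \<Longrightarrow> smooth_on U (\<lambda>p. a p / b p)"
proof -
  assume U: "open U" and a: "smooth_on U a" and b: "smooth_on U b" and nz: "\<forall>p\<in>U. b p \<noteq> 0"
  have "alg U (\<lambda>p. a p * inverse (b p))" using nz by (intro alg.mult alg.inv alg.base a b)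
  then have "smooth_on U (\<lambda>p. a p * inverse (b p))" by (rule alg_smooth[OF U])
  moreover have "(\<lambda>p. a p * inverse (b p)) = (\<lambda>p. a p / b p)" by (auto simp: divide_inverse)
  ultimately show ?thesis by simp
qed

lemma smooth_sum: assumes U: "open U" shows "finite A \<Longrightarrow> (\<And>x. x \<in> A \<Longrightarrow> smooth_on U (f x)) \<Longrightarrow> smooth_on U (\<lambda>p. \<Sum>x\<in>A. f x p)"
proof (induction A rule: finite_induct)
  case empty then show ?case using smooth_const[OF U] by simp
next
  case (insert x F) then show ?case using smooth_add[OF U, of "f x"] by simp
qed

lemma smooth_prod: assumes U: "open U" shows "finite A \<Longrightarrow> (\<And>x. x \<in> A \<Longrightarrow> smooth_on U (f x)) \<Longrightarrow> smooth_on U (\<lambda>p. \<Prod>x\<in>A. f x p)"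
proof (induction A rule: finite_induct)
  case empty then show ?case using smooth_const[OF U] by simp
next
  case (insert x F) then show ?case using smooth_mult[OF U, of "f x"] by simp
qed


lemma line_deriv:
  assumes "h differentiable (at (q + s *\<^sub>R axis k 1))"
  shows "((\<lambda>s. h (q + s *\<^sub>R axis k 1)) has_real_derivative pd k h (q + s *\<^sub>R axis k 1)) (at s)"
proof -
  obtain D where D: "(h has_derivative D) (at (q + s *\<^sub>R axis k 1))"
    using assms unfolding differentiable_def by blast
  have lin: "linear D" using D has_derivative_linear by blast
  have d1: "((\<lambda>s::real. q + s *\<^sub>R axis k 1) has_derivative (\<lambda>t. t *\<^sub>R axis k 1)) (at s)"
    by (auto intro!: derivative_eq_intros)
  have "((\<lambda>s. h (q + s *\<^sub>R axis k 1)) has_derivative (\<lambda>t. D (t *\<^sub>R axis k 1))) (at s)"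
    using has_derivative_compose[OF d1 D] by (simp add: o_def)
  moreover have "(\<lambda>t. D (t *\<^sub>R axis k 1)) = (*) (D (axis k 1))"
    by (rule ext) (simp add: linear_scale[OF lin])
  ultimately show ?thesis
    unfolding has_field_derivative_def using pd_has_derivative[OF D] by simp
qed

lemma norm_two_axes:
  "dist (p + a *\<^sub>R axis i 1 + b *\<^sub>R axis j (1::real)) p \<le> \<bar>a\<bar> + \<bar>b\<bar>"
proof -
  have "dist (p + a *\<^sub>R axis i 1 + b *\<^sub>R axis j (1::real)) p = norm (a *\<^sub>R axis i 1 + b *\<^sub>R axis j (1::real))"
    by (simp add: dist_norm algebra_simps)
  also have "\<dots> \<le> norm (a *\<^sub>R axis i (1::real)) + norm (b *\<^sub>R axis j (1::real))"
    by (rule norm_triangle_ineq)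
  finally show ?thesis by simp
qed

lemma delta_lemma:
  fixes h :: "real^'n::finite \<Rightarrow> real"
  assumes U: "open U" and h: "smooth_on U h" and r: "ball p r \<subseteq> U" and t: "0 < t" "2 * t < r"
  shows "\<exists>x. dist x p < 2 * t \<and>
    h (p + t *\<^sub>R axis i 1 + t *\<^sub>R axis j 1) - h (p + t *\<^sub>R axis i 1) - h (p + t *\<^sub>R axis j 1) + h p
      = t^2 * pd j (pd i h) x"
proof -
  let ?ei = "axis i (1::real)" and ?ej = "axis j (1::real)"
  have inU: "p + a *\<^sub>R ?ei + b *\<^sub>R ?ej \<in> U" if "\<bar>a\<bar> \<le> t" "\<bar>b\<bar> \<le> t" for a b
  proof -
    have "dist (p + a *\<^sub>R ?ei + b *\<^sub>R ?ej) p < r"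
      using norm_two_axes[of p a i b j] that t by linarith
    then show ?thesis using r by (auto simp: dist_commute)
  qed
  define u where "u s = h ((p + t *\<^sub>R ?ej) + s *\<^sub>R ?ei) - h (p + s *\<^sub>R ?ei)" for s
  have du: "(u has_real_derivative (pd i h ((p + t *\<^sub>R ?ej) + s *\<^sub>R ?ei) - pd i h (p + s *\<^sub>R ?ei))) (at s)"
    if "0 \<le> s" "s \<le> t" for s
  proof -
    have "p + t *\<^sub>R ?ej + s *\<^sub>R ?ei \<in> U" using inU[of s t] that t by (simp add: algebra_simps)
    moreover have "p + s *\<^sub>R ?ei \<in> U" using inU[of s 0] that t by simp
    ultimately show ?thesis unfolding u_def
      by (intro DERIV_diff line_deriv smooth_diff_at[OF U h])
  qed
  obtain \<xi> where xi: "0 < \<xi>" "\<xi> < t"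
    "u t - u 0 = (t - 0) * (pd i h ((p + t *\<^sub>R ?ej) + \<xi> *\<^sub>R ?ei) - pd i h (p + \<xi> *\<^sub>R ?ei))"
    using MVT2[of 0 t u, OF t(1) du] by auto
  define v where "v s = pd i h ((p + \<xi> *\<^sub>R ?ei) + s *\<^sub>R ?ej)" for s
  have dv: "(v has_real_derivative pd j (pd i h) ((p + \<xi> *\<^sub>R ?ei) + s *\<^sub>R ?ej)) (at s)"
    if "0 \<le> s" "s \<le> t" for s
  proof -
    have "p + \<xi> *\<^sub>R ?ei + s *\<^sub>R ?ej \<in> U" using inU[of \<xi> s] that xi by simp
    then show ?thesis unfolding v_def
      by (intro line_deriv smooth_diff_at[OF U smooth_pd[OF h]])
  qed
  obtain \<eta> where eta: "0 < \<eta>" "\<eta> < t"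
    "v t - v 0 = (t - 0) * pd j (pd i h) ((p + \<xi> *\<^sub>R ?ei) + \<eta> *\<^sub>R ?ej)"
    using MVT2[of 0 t v, OF t(1) dv] by auto
  have "v t - v 0 = pd i h ((p + t *\<^sub>R ?ej) + \<xi> *\<^sub>R ?ei) - pd i h (p + \<xi> *\<^sub>R ?ei)"
    unfolding v_def by (simp add: algebra_simps)
  then have "u t - u 0 = t^2 * pd j (pd i h) ((p + \<xi> *\<^sub>R ?ei) + \<eta> *\<^sub>R ?ej)"
    using xi(3) eta(3) by (simp add: power2_eq_square)
  moreover have "u t - u 0 = h (p + t *\<^sub>R ?ei + t *\<^sub>R ?ej) - h (p + t *\<^sub>R ?ei) - h (p + t *\<^sub>R ?ej) + h p"
    unfolding u_def by (simp add: algebra_simps)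
  moreover have "dist ((p + \<xi> *\<^sub>R ?ei) + \<eta> *\<^sub>R ?ej) p < 2 * t"
    using norm_two_axes[of p \<xi> i \<eta> j] xi eta by linarith
  ultimately show ?thesis by metis
qed

lemma schwarz:
  fixes h :: "real^'n::finite \<Rightarrow> real"
  assumes U: "open U" and h: "smooth_on U h" and p: "p \<in> U"
  shows "pd i (pd j h) p = pd j (pd i h) p"
proof (rule ccontr)
  assume ne: "pd i (pd j h) p \<noteq> pd j (pd i h) p"
  obtain r where r: "r > 0" "ball p r \<subseteq> U" using U p open_contains_ball by blast
  define e where "e = \<bar>pd i (pd j h) p - pd j (pd i h) p\<bar> / 2"
  have e: "e > 0" using ne by (simp add: e_def)
  have c1: "continuous (at p) (pd i (pd j h))"
    using smooth_diff_at[OF U smooth_pd[OF smooth_pd[OF h]] p] differentiable_imp_continuous_within by blast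
  have c2: "continuous (at p) (pd j (pd i h))"
    using smooth_diff_at[OF U smooth_pd[OF smooth_pd[OF h]] p] differentiable_imp_continuous_within by blast
  obtain d1 where d1: "d1 > 0" "\<And>x. dist x p < d1 \<Longrightarrow> dist (pd i (pd j h) x) (pd i (pd j h) p) < e"
    using c1 e unfolding continuous_at_eps_delta by blast
  obtain d2 where d2: "d2 > 0" "\<And>x. dist x p < d2 \<Longrightarrow> dist (pd j (pd i h) x) (pd j (pd i h) p) < e"
    using c2 e unfolding continuous_at_eps_delta by blast
  define t where "t = min r (min d1 d2) / 4"
  have t: "0 < t" "2 * t < r" "2 * t < d1" "2 * t < d2" using r d1 d2 by (auto simp: t_def)
  obtain x where x: "dist x p < 2 * t"
    "h (p + t *\<^sub>R axis i 1 + t *\<^sub>R axis j 1) - h (p + t *\<^sub>R axis i 1) - h (p + t *\<^sub>R axis j 1) + h p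
      = t^2 * pd j (pd i h) x"
    using delta_lemma[OF U h r(2) t(1,2)] by blast
  obtain y where y: "dist y p < 2 * t"
    "h (p + t *\<^sub>R axis j 1 + t *\<^sub>R axis i 1) - h (p + t *\<^sub>R axis j 1) - h (p + t *\<^sub>R axis i 1) + h p
      = t^2 * pd i (pd j h) y"
    using delta_lemma[OF U h r(2) t(1,2), of j i] by blast
  have "t^2 * pd j (pd i h) x = t^2 * pd i (pd j h) y"
    using x(2) y(2) by (simp add: algebra_simps)
  then have xy: "pd j (pd i h) x = pd i (pd j h) y" using t by simp
  have "dist (pd i (pd j h) y) (pd i (pd j h) p) < e" using d1 y t by simp
  moreover have "dist (pd j (pd i h) x) (pd j (pd i h) p) < e" using d2 x t by simp
  ultimately have "\<bar>pd i (pd j h) p - pd j (pd i h) p\<bar> < 2 * e"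
    using xy by (simp add: dist_real_def)
  then show False by (simp add: e_def)
qed


lemma pd_sum:
  assumes "finite A" "\<And>x. x \<in> A \<Longrightarrow> f x differentiable (at p)"
  shows "pd k (\<lambda>q. \<Sum>x\<in>A. f x q) p = (\<Sum>x\<in>A. pd k (f x) p)"
proof -
  have "\<forall>x\<in>A. \<exists>D. (f x has_derivative D) (at p)" using assms(2) unfolding differentiable_def by blast
  then obtain D where D: "\<And>x. x \<in> A \<Longrightarrow> (f x has_derivative D x) (at p)" by metis
  have "((\<lambda>q. \<Sum>x\<in>A. f x q) has_derivative (\<lambda>h. \<Sum>x\<in>A. D x h)) (at p)"
    by (rule has_derivative_sum) (use D in auto)
  then have "pd k (\<lambda>q. \<Sum>x\<in>A. f x q) p = (\<Sum>x\<in>A. D x (axis k 1))" by (rule pd_has_derivative)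
  also have "\<dots> = (\<Sum>x\<in>A. pd k (f x) p)"
    by (rule sum.cong) (auto simp: pd_has_derivative[OF D])
  finally show ?thesis .
qed

lemma pd_cmult:
  assumes "a differentiable (at p)"
  shows "pd k (\<lambda>q. c * a q) p = c * pd k a p"
  using pd_mult[of "\<lambda>q. c" p a k] assms by (simp add: pd_const)

lemma pd_diff:
  assumes "a differentiable (at p)" "b differentiable (at p)"
  shows "pd k (\<lambda>q. a q - b q) p = pd k a p - pd k b p"
proof -
  have "pd k (\<lambda>q. a q + (-1) * b q) p = pd k a p + pd k (\<lambda>q. (-1) * b q) p"
    by (rule pd_add) (use assms in \<open>auto intro: differentiable_mult\<close>)
  then show ?thesis using pd_cmult[OF assms(2), of k "-1"] by simp
qed

lemma smooth_det:
  assumes U: "open U" and A: "\<And>a b. smooth_on U (\<lambda>q. A q $ a $ b)"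
  shows "smooth_on U (\<lambda>q. det (A q))"
  unfolding det_def
  by (intro smooth_sum[OF U] smooth_mult[OF U] smooth_const[OF U] smooth_prod[OF U] finite_UNIV A)
     (simp_all add: finite_permutations)

lemma inv_props:
  fixes M :: "real^'n::finite^'n"
  assumes "det M \<noteq> 0"
  shows "M ** matrix_inv M = mat 1" "matrix_inv M ** M = mat 1"
proof -
  have "invertible M" using assms invertible_det_nz by blast
  then have "\<exists>A'. M ** A' = mat 1 \<and> A' ** M = mat 1" unfolding invertible_def by blast
  then have "M ** matrix_inv M = mat 1 \<and> matrix_inv M ** M = mat 1"
    unfolding matrix_inv_def by (rule someI_ex)
  then show "M ** matrix_inv M = mat 1" "matrix_inv M ** M = mat 1" by auto
qed

lemma inv_unique:
  fixes M :: "real^'n::finite^'n"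
  assumes "det M \<noteq> 0" "B ** M = mat 1"
  shows "matrix_inv M = B"
proof -
  have "B ** (M ** matrix_inv M) = B" by (simp only: inv_props(1)[OF assms(1)] matrix_mul_rid)
  moreover have "B ** (M ** matrix_inv M) = (B ** M) ** matrix_inv M" by (rule matrix_mul_assoc)
  moreover have "(B ** M) ** matrix_inv M = matrix_inv M" by (simp only: assms(2) matrix_mul_lid)
  ultimately show ?thesis by metis
qed

lemma inv_symm:
  fixes M :: "real^'n::finite^'n"
  assumes "det M \<noteq> 0" "transpose M = M"
  shows "transpose (matrix_inv M) = matrix_inv M"
proof -
  have "transpose (M ** matrix_inv M) = transpose (matrix_inv M) ** transpose M"
    by (rule matrix_transpose_mul)
  then have "transpose (matrix_inv M) ** M = mat 1"
    by (simp only: inv_props(1)[OF assms(1)] assms(2) transpose_mat)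
  then show ?thesis using inv_unique[OF assms(1)] by metis
qed

lemma finv_cramer:
  fixes M :: "real^'n::finite^'n"
  assumes "det M \<noteq> 0"
  shows "matrix_inv M $ i $ j = det (\<chi> a c. if c = i then axis j 1 $ a else M $ a $ c) / det M"
proof -
  have "M *v (matrix_inv M *v axis j 1) = axis j 1"
    by (simp add: matrix_vector_mul_assoc inv_props[OF assms])
  then have "matrix_inv M *v axis j 1 = (\<chi> k. det (\<chi> a c. if c = k then axis j 1 $ a else M $ a $ c) / det M)"
    using cramer[OF assms] by blast
  then have "(matrix_inv M *v axis j 1) $ i = det (\<chi> a c. if c = i then axis j 1 $ a else M $ a $ c) / det M"
    by simp
  moreover have "(matrix_inv M *v axis j 1) $ i = matrix_inv M $ i $ j"
    by (simp add: matrix_vector_mult_basis column_def)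
  ultimately show ?thesis by simp
qed

lemma smooth_finv:
  assumes U: "open U" and F: "\<And>i j. smooth_on U (fco F i j)" and nd: "\<And>p. p \<in> U \<Longrightarrow> det (F p) \<noteq> 0"
  shows "smooth_on U (finv F i j)"
proof -
  have sF: "smooth_on U (\<lambda>q. F q $ a $ b)" for a b using F[of a b] by (simp add: fco_def[abs_def])
  have "smooth_on U (\<lambda>q. det (\<chi> a c. if c = i then axis j 1 $ a else F q $ a $ c) / det (F q))"
  proof (rule smooth_divide[OF U])
    show "smooth_on U (\<lambda>q. det (\<chi> a c. if c = i then axis j 1 $ a else F q $ a $ c))"
    proof (rule smooth_det[OF U])
      fix a b
      show "smooth_on U (\<lambda>q. (\<chi> a c. if c = i then axis j 1 $ a else F q $ a $ c) $ a $ b)"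
        by (cases "b = i") (simp_all add: smooth_const[OF U] sF)
    qed
    show "smooth_on U (\<lambda>q. det (F q))" by (rule smooth_det[OF U sF])
  qed (use nd in auto)
  then show ?thesis
    by (rule smooth_cong[OF U, rotated]) (simp add: finv_def finv_cramer nd)
qed


lemma mat_entry_eq:
  fixes A B :: "real^'n::finite^'n"
  shows "(A ** B) $ a $ j = (\<Sum>b\<in>UNIV. A $ a $ b * B $ b $ j)"
  by (simp add: matrix_matrix_mult_def)

lemma finv_deriv:
  assumes U: "open U" and F: "\<And>i j. smooth_on U (fco F i j)" and nd: "\<And>p. p \<in> U \<Longrightarrow> det (F p) \<noteq> 0"
    and p: "p \<in> U"
  shows "(\<chi> i j. pd l (finv F i j) p) = - (matrix_inv (F p) ** (\<chi> i j. pd l (fco F i j) p) ** matrix_inv (F p))"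
proof -
  define dF where "dF = (\<chi> i j. pd l (fco F i j) p)"
  define dI where "dI = (\<chi> i j. pd l (finv F i j) p)"
  define Im where "Im = matrix_inv (F p)"
  have sI: "smooth_on U (finv F i j)" for i j by (rule smooth_finv[OF U F nd])
  have row: "(\<Sum>b\<in>UNIV. pd l (fco F a b) p * finv F b j p + fco F a b p * pd l (finv F b j) p) = 0" for a j
  proof -
    have eqU: "(\<Sum>b\<in>UNIV. fco F a b q * finv F b j q) = (if a = j then 1 else 0)" if "q \<in> U" for q
    proof -
      have "(F q ** matrix_inv (F q)) $ a $ j = mat 1 $ a $ j" using inv_props(1)[OF nd[OF that]] by simp
      then show ?thesis by (simp add: mat_entry_eq mat_def fco_def finv_def)
    qed
    have "pd l (\<lambda>q. \<Sum>b\<in>UNIV. fco F a b q * finv F b j q) p = pd l (\<lambda>q. if a = j then 1 else 0) p"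
      by (rule pd_local[OF U p]) (rule eqU)
    also have "\<dots> = 0" by (rule pd_const)
    finally have z: "pd l (\<lambda>q. \<Sum>b\<in>UNIV. fco F a b q * finv F b j q) p = 0" .
    have "pd l (\<lambda>q. \<Sum>b\<in>UNIV. fco F a b q * finv F b j q) p = (\<Sum>b\<in>UNIV. pd l (\<lambda>q. fco F a b q * finv F b j q) p)"
      by (rule pd_sum) (auto intro!: smooth_diff_at[OF U _ p] smooth_mult[OF U] F sI)
    also have "\<dots> = (\<Sum>b\<in>UNIV. pd l (fco F a b) p * finv F b j p + fco F a b p * pd l (finv F b j) p)"
      by (rule sum.cong) (auto intro!: pd_mult smooth_diff_at[OF U _ p] F sI)
    finally show ?thesis using z by simp
  qed
  have eq: "dF ** Im + F p ** dI = 0"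
    using row by (simp add: vec_eq_iff mat_entry_eq dF_def dI_def Im_def fco_def finv_def sum.distrib)
  have "Im ** (dF ** Im) + Im ** (F p ** dI) = 0"
    using arg_cong[OF eq, of "\<lambda>X. Im ** X"] by (simp add: matrix_add_ldistrib)
  moreover have "Im ** (F p ** dI) = dI"
    by (simp add: matrix_mul_assoc Im_def inv_props(2)[OF nd[OF p]])
  ultimately have "dI = - (Im ** (dF ** Im))" by (simp add: eq_neg_iff_add_eq_0 add.commute)
  then show ?thesis by (simp add: dF_def dI_def Im_def matrix_mul_assoc)
qed

definition Xv :: "(real^'n \<Rightarrow> real^'n^'n) \<Rightarrow> 'n::finite \<Rightarrow> real^'n \<Rightarrow> real" where
  "Xv M k p = (\<Sum>i\<in>UNIV. \<Sum>j\<in>UNIV. finv M i j p * pd k (fco M i j) p)"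

lemma smooth_Xv:
  assumes U: "open U" and F: "\<And>i j. smooth_on U (fco F i j)" and nd: "\<And>p. p \<in> U \<Longrightarrow> det (F p) \<noteq> 0"
  shows "smooth_on U (Xv F k)"
  unfolding Xv_def
  by (intro smooth_sum[OF U] smooth_mult[OF U] smooth_finv[OF U F nd] smooth_pd F) auto

definition sprod :: "real^'n::finite^'n \<Rightarrow> real^'n^'n \<Rightarrow> real" where
  "sprod X Y = (\<Sum>i\<in>UNIV. \<Sum>j\<in>UNIV. X $ i $ j * Y $ i $ j)"

lemma sprod_trace: "sprod X Y = trace (X ** transpose Y)"
  by (simp add: sprod_def trace_def matrix_matrix_mult_def transpose_def)

lemma sprod_sym:
  fixes I A B :: "real^'n::finite^'n"
  assumes "transpose A = A" "transpose B = B"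
  shows "sprod (I ** A ** I) B = sprod (I ** B ** I) A"
proof -
  have "sprod (I ** A ** I) B = trace ((I ** A) ** (I ** B))"
    by (simp add: sprod_trace assms matrix_mul_assoc)
  also have "\<dots> = trace ((I ** B) ** (I ** A))" by (rule trace_mul_sym)
  also have "\<dots> = sprod (I ** B ** I) A"
    by (simp add: sprod_trace assms matrix_mul_assoc)
  finally show ?thesis .
qed

lemma X_closed:
  assumes U: "open U" and F: "\<And>i j. smooth_on U (fco F i j)" and nd: "\<And>p. p \<in> U \<Longrightarrow> det (F p) \<noteq> 0"
    and sym: "\<And>p i j. p \<in> U \<Longrightarrow> F p $ i $ j = F p $ j $ i" and p: "p \<in> U"
  shows "pd l (Xv F k) p = pd k (Xv F l) p"
proof -
  have sI: "smooth_on U (finv F i j)" for i j by (rule smooth_finv[OF U F nd])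
  define Im where "Im = matrix_inv (F p)"
  define D where "D k = (\<chi> i j. pd k (fco F i j) p)" for k
  have symD: "transpose (D k) = D k" for k
  proof -
    have "pd k (fco F j i) p = pd k (fco F i j) p" for i j
      by (rule pd_local[OF U p]) (simp add: fco_def sym)
    then show ?thesis by (simp add: vec_eq_iff transpose_def D_def)
  qed
  have symI: "transpose Im = Im"
    unfolding Im_def by (rule inv_symm[OF nd[OF p]]) (simp add: vec_eq_iff transpose_def sym[OF p])
  have expand: "pd l (Xv F k) p = - sprod (Im ** D l ** Im) (D k)
      + (\<Sum>i\<in>UNIV. \<Sum>j\<in>UNIV. finv F i j p * pd l (pd k (fco F i j)) p)" for l k
  proof -
    have "pd l (Xv F k) p = (\<Sum>i\<in>UNIV. pd l (\<lambda>q. \<Sum>j\<in>UNIV. finv F i j q * pd k (fco F i j) q) p)"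
      unfolding Xv_def
      by (rule pd_sum) (auto intro!: smooth_diff_at[OF U _ p] smooth_sum[OF U] smooth_mult[OF U] sI smooth_pd F)
    also have "\<dots> = (\<Sum>i\<in>UNIV. \<Sum>j\<in>UNIV. pd l (\<lambda>q. finv F i j q * pd k (fco F i j) q) p)"
      by (rule sum.cong[OF refl], rule pd_sum)
        (auto intro!: smooth_diff_at[OF U _ p] smooth_mult[OF U] sI smooth_pd F)
    also have "\<dots> = (\<Sum>i\<in>UNIV. \<Sum>j\<in>UNIV. pd l (finv F i j) p * pd k (fco F i j) p
                      + finv F i j p * pd l (pd k (fco F i j)) p)"
      by (intro sum.cong refl pd_mult smooth_diff_at[OF U _ p] sI smooth_pd F)
    also have "\<dots> = sprod (\<chi> i j. pd l (finv F i j) p) (D k)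
                   + (\<Sum>i\<in>UNIV. \<Sum>j\<in>UNIV. finv F i j p * pd l (pd k (fco F i j)) p)"
      by (simp add: sprod_def D_def sum.distrib)
    also have "(\<chi> i j. pd l (finv F i j) p) = - (Im ** D l ** Im)"
      unfolding Im_def D_def by (rule finv_deriv[OF U F nd p])
    finally show ?thesis by (simp add: sprod_def sum_negf)
  qed
  have "(\<Sum>i\<in>UNIV. \<Sum>j\<in>UNIV. finv F i j p * pd l (pd k (fco F i j)) p)
      = (\<Sum>i\<in>UNIV. \<Sum>j\<in>UNIV. finv F i j p * pd k (pd l (fco F i j)) p)"
    by (intro sum.cong refl arg_cong2[where f="(*)"] schwarz[OF U F p])
  then show ?thesis using expand[of l k] expand[of k l] sprod_sym[OF symD symD, of Im l k] by simp
qed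


lemma lin_expand:
  fixes D :: "real^'n::finite \<Rightarrow> real"
  assumes "linear D"
  shows "D h = (\<Sum>k\<in>UNIV. h$k * D (axis k 1))"
proof -
  have "h = (\<Sum>k\<in>UNIV. h$k *\<^sub>R axis k 1)"
    using basis_expansion[of h] by (simp add: scalar_mult_eq_scaleR)
  then have "D h = D (\<Sum>k\<in>UNIV. h$k *\<^sub>R axis k 1)" by simp
  also have "\<dots> = (\<Sum>k\<in>UNIV. h$k * D (axis k 1))"
    by (simp add: linear_sum[OF assms] linear_scale[OF assms])
  finally show ?thesis .
qed

lemma Dpartials:
  fixes h :: "real^'n::finite \<Rightarrow> real"
  assumes "h differentiable (at z)"
  shows "(h has_derivative (\<lambda>v. \<Sum>k\<in>UNIV. v$k * pd k h z)) (at z)"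
proof -
  obtain D where D: "(h has_derivative D) (at z)" using assms unfolding differentiable_def by blast
  have "D v = (\<Sum>k\<in>UNIV. v$k * pd k h z)" for v
    using lin_expand[OF has_derivative_linear[OF D], of v] pd_has_derivative[OF D] by simp
  then have "D = (\<lambda>v. \<Sum>k\<in>UNIV. v$k * pd k h z)" by (rule ext)
  then show ?thesis using D by simp
qed

lemma dir_deriv:
  fixes h :: "real^'n::finite \<Rightarrow> real"
  assumes "(h has_derivative (\<lambda>v. \<Sum>k\<in>UNIV. v$k * P k)) (at (a + t *\<^sub>R d))"
  shows "((\<lambda>t. h (a + t *\<^sub>R d)) has_real_derivative (\<Sum>k\<in>UNIV. d$k * P k)) (at t)"
proof -
  have d1: "((\<lambda>t::real. a + t *\<^sub>R d) has_derivative (\<lambda>s. s *\<^sub>R d)) (at t)"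
    by (auto intro!: derivative_eq_intros)
  have "((\<lambda>t. h (a + t *\<^sub>R d)) has_derivative (\<lambda>s. \<Sum>k\<in>UNIV. (s *\<^sub>R d)$k * P k)) (at t)"
    using has_derivative_compose[OF d1 assms] by (simp add: o_def)
  moreover have "(\<lambda>s. \<Sum>k\<in>UNIV. (s *\<^sub>R d)$k * P k) = (*) (\<Sum>k\<in>UNIV. d$k * P k)"
    by (auto simp: sum_distrib_left algebra_simps intro!: ext)
  ultimately show ?thesis unfolding has_field_derivative_def by simp
qed

lemma sum_axis: "(\<Sum>j\<in>UNIV. a j * (axis k (1::real) :: real^'n::finite) $ j) = a k"
proof -
  have "(\<Sum>j\<in>UNIV. a j * (axis k (1::real) :: real^'n) $ j) = (\<Sum>j\<in>UNIV. if j = k then a j else 0)"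
    by (rule sum.cong) (auto simp: axis_def)
  then show ?thesis by simp
qed

lemma poincare:
  fixes w :: "'n::finite \<Rightarrow> real^'n \<Rightarrow> real"
  assumes r: "0 < r" and sm: "\<And>i. smooth_on (ball p0 r) (w i)"
    and cl: "\<And>p i j. p \<in> ball p0 r \<Longrightarrow> pd j (w i) p = pd i (w j) p"
  shows "\<exists>\<sigma>. smooth_on (ball p0 r) \<sigma> \<and> (\<forall>p\<in>ball p0 r. \<forall>i. pd i \<sigma> p = w i p)"
proof -
  define V where "V = ball p0 r"
  have U: "open V" by (simp add: V_def)
  have cV: "convex V" by (simp add: V_def)
  define y where "y x t = p0 + t *\<^sub>R (x - p0)" for x and t :: real
  have yV: "y x t \<in> V" if "x \<in> V" "t \<in> {0..1}" for x t
  proof -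
    have "dist p0 (y x t) = \<bar>t\<bar> * norm (x - p0)" by (simp add: y_def dist_norm)
    also have "\<dots> \<le> norm (x - p0)" using that by (auto intro: mult_left_le_one_le)
    also have "\<dots> < r" using that by (simp add: V_def dist_norm norm_minus_commute)
    finally show ?thesis by (simp add: V_def)
  qed
  have Dw: "(w i has_derivative (\<lambda>v. \<Sum>k\<in>UNIV. v$k * pd k (w i) z)) (at z)" if "z \<in> V" for i z
    by (rule Dpartials, rule smooth_diff_at[OF U _ that]) (use sm in \<open>simp add: V_def\<close>)
  have sw: "smooth_on V (w i)" for i using sm by (simp add: V_def)
  have contw: "continuous_on V (w i)" for i
    using smooth_diff[OF sw] differentiable_imp_continuous_on by blast
  have contpw: "continuous_on V (pd k (w i))" for i k
    using smooth_diff[OF smooth_pd[OF sw]] differentiable_imp_continuous_on by blast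
  define f where "f x t = (\<Sum>i\<in>UNIV. w i (y x t) * (x - p0)$i)" for x t
  define c where "c k x t = w k (y x t) + t * (\<Sum>i\<in>UNIV. pd k (w i) (y x t) * (x - p0)$i)" for k x t
  define B where "B k = Blinfun (\<lambda>h::real^'n. h $ k)" for k
  have Bapp: "blinfun_apply (B k) h = h $ k" for k h
    by (simp add: B_def bounded_linear_Blinfun_apply bounded_linear_vec_nth)
  define fx where "fx x t = (\<Sum>k\<in>UNIV. c k x t *\<^sub>R B k)" for x t
  have fxapp: "blinfun_apply (fx x t) h = (\<Sum>k\<in>UNIV. c k x t * h$k)" for x t h
    by (simp add: fx_def blinfun.sum_left blinfun.scaleR_left Bapp)
  have deriv_f: "((\<lambda>x. f x t) has_derivative blinfun_apply (fx x t)) (at x within V)"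
    if "x \<in> V" "t \<in> cbox 0 1" for x t
  proof -
    have yx: "y x t \<in> V" using yV that by simp
    have dy: "((\<lambda>x. y x t) has_derivative (\<lambda>v. t *\<^sub>R v)) (at x)"
      unfolding y_def by (auto intro!: derivative_eq_intros simp: algebra_simps)
    have dwi: "((\<lambda>x. w i (y x t)) has_derivative (\<lambda>v. \<Sum>k\<in>UNIV. (t *\<^sub>R v)$k * pd k (w i) (y x t))) (at x)" for i
      using has_derivative_compose[OF dy Dw[OF yx]] by (simp add: o_def)
    have dc: "((\<lambda>x. (x - p0)$i) has_derivative (\<lambda>v. v$i)) (at x)" for i
    proof -
      have "((\<lambda>x. x - p0) has_derivative (\<lambda>v. v)) (at x)" by (auto intro!: derivative_eq_intros)
      then show ?thesis using bounded_linear.has_derivative[OF bounded_linear_vec_nth] by blast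
    qed
    have "((\<lambda>x. f x t) has_derivative
        (\<lambda>v. \<Sum>i\<in>UNIV. w i (y x t) * v$i + (\<Sum>k\<in>UNIV. (t *\<^sub>R v)$k * pd k (w i) (y x t)) * (x - p0)$i)) (at x)"
      unfolding f_def by (intro has_derivative_sum has_derivative_mult dwi dc)
    moreover have "(\<lambda>v. \<Sum>i\<in>UNIV. w i (y x t) * v$i + (\<Sum>k\<in>UNIV. (t *\<^sub>R v)$k * pd k (w i) (y x t)) * (x - p0)$i)
        = blinfun_apply (fx x t)"
    proof (rule ext)
      fix v :: "real^'n"
      have "(\<Sum>i\<in>UNIV. (\<Sum>k\<in>UNIV. (t *\<^sub>R v)$k * pd k (w i) (y x t)) * (x - p0)$i)
          = (\<Sum>k\<in>UNIV. \<Sum>i\<in>UNIV. t * v$k * pd k (w i) (y x t) * (x - p0)$i)"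
        by (subst sum.swap) (simp add: sum_distrib_right mult.assoc)
      also have "\<dots> = (\<Sum>k\<in>UNIV. (t * (\<Sum>i\<in>UNIV. pd k (w i) (y x t) * (x - p0)$i)) * v$k)"
        by (simp add: sum_distrib_left sum_distrib_right algebra_simps)
      finally have eq2: "(\<Sum>i\<in>UNIV. (\<Sum>k\<in>UNIV. (t *\<^sub>R v)$k * pd k (w i) (y x t)) * (x - p0)$i)
          = (\<Sum>k\<in>UNIV. (t * (\<Sum>i\<in>UNIV. pd k (w i) (y x t) * (x - p0)$i)) * v$k)" .
      have "(\<Sum>i\<in>UNIV. w i (y x t) * v$i + (\<Sum>k\<in>UNIV. (t *\<^sub>R v)$k * pd k (w i) (y x t)) * (x - p0)$i)
          = (\<Sum>i\<in>UNIV. w i (y x t) * v$i) + (\<Sum>i\<in>UNIV. (\<Sum>k\<in>UNIV. (t *\<^sub>R v)$k * pd k (w i) (y x t)) * (x - p0)$i)"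
        by (rule sum.distrib)
      also have "\<dots> = (\<Sum>k\<in>UNIV. w k (y x t) * v$k) + (\<Sum>k\<in>UNIV. (t * (\<Sum>i\<in>UNIV. pd k (w i) (y x t) * (x - p0)$i)) * v$k)"
        using eq2 by simp
      also have "\<dots> = (\<Sum>k\<in>UNIV. c k x t * v$k)"
        unfolding c_def distrib_right by (rule sum.distrib[symmetric])
      finally show "(\<Sum>i\<in>UNIV. w i (y x t) * v$i + (\<Sum>k\<in>UNIV. (t *\<^sub>R v)$k * pd k (w i) (y x t)) * (x - p0)$i)
          = blinfun_apply (fx x t) v"
        by (simp only: fxapp)
    qed
    ultimately show ?thesis by (simp add: has_derivative_at_withinI)
  qed
  have ycont: "continuous_on (V \<times> cbox 0 1) (\<lambda>(x, t). y x t)"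
    unfolding y_def by (auto intro!: continuous_intros simp: split_beta)
  have yimg: "(\<lambda>(x, t). y x t) ` (V \<times> cbox 0 1) \<subseteq> V" using yV by auto
  have contc: "continuous_on (V \<times> cbox 0 1) (\<lambda>(x, t). c k x t)" for k
  proof -
    have a: "continuous_on (V \<times> cbox 0 1) (\<lambda>z. w k ((\<lambda>(x, t). y x t) z))"
      by (rule continuous_on_compose2[OF contw ycont yimg])
    have b: "continuous_on (V \<times> cbox 0 1) (\<lambda>z. pd k (w i) ((\<lambda>(x, t). y x t) z))" for i
      by (rule continuous_on_compose2[OF contpw ycont yimg])
    show ?thesis unfolding c_def split_beta
      using a b by (auto intro!: continuous_intros simp: split_beta)
  qed
  have cont: "continuous_on (V \<times> cbox 0 1) (\<lambda>(x, t). fx x t)"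
    unfolding fx_def split_beta
    using contc by (auto intro!: continuous_intros simp: split_beta)
  have contf: "continuous_on (cbox 0 1) (f x)" if "x \<in> V" for x
  proof -
    have "continuous_on (cbox 0 1) (\<lambda>t. y x t)" unfolding y_def by (auto intro!: continuous_intros)
    moreover have "(\<lambda>t. y x t) ` cbox 0 1 \<subseteq> V" using yV that by auto
    ultimately have "continuous_on (cbox 0 1) (\<lambda>t. w i (y x t))" for i
      using continuous_on_compose2[OF contw] by blast
    then show ?thesis unfolding f_def by (auto intro!: continuous_intros)
  qed
  have intf: "f x integrable_on cbox 0 1" if "x \<in> V" for x
    using integrable_continuous[OF contf[OF that]] .
  define \<sigma> where "\<sigma> x = integral (cbox 0 1) (f x)" for x
  have dsig: "(\<sigma> has_derivative blinfun_apply (integral (cbox 0 1) (fx x))) (at x)" if "x \<in> V" for x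
  proof -
    have "(\<sigma> has_derivative blinfun_apply (integral (cbox 0 1) (fx x))) (at x within V)"
      unfolding \<sigma>_def[abs_def]
      by (rule leibniz_rule[OF deriv_f intf cont that cV])
    then show ?thesis using at_within_open[OF that U] by simp
  qed
  have pdsig: "pd k \<sigma> x = w k x" if x: "x \<in> V" for k x
  proof -
    have contfx: "continuous_on (cbox 0 1) (fx x)"
    proof -
      have "continuous_on (cbox 0 1) (\<lambda>t. (\<lambda>(x, t). fx x t) (x, t))"
        by (rule continuous_on_compose2[OF cont]) (use x in \<open>auto intro!: continuous_intros\<close>)
      then show ?thesis by simp
    qed
    have "pd k \<sigma> x = blinfun_apply (integral (cbox 0 1) (fx x)) (axis k 1)"
      by (rule pd_has_derivative[OF dsig[OF x]])
    also have "\<dots> = integral (cbox 0 1) (\<lambda>t. blinfun_apply (fx x t) (axis k 1))"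
      by (rule blinfun_apply_integral[OF integrable_continuous[OF contfx]])
    also have "\<dots> = integral {0..1} (\<lambda>t. c k x t)"
    proof -
      have "blinfun_apply (fx x t) (axis k 1) = c k x t" for t
        by (simp add: fxapp sum_axis)
      then show ?thesis by simp
    qed
    also have "\<dots> = w k x"
    proof -
      define g where "g t = t * w k (y x t)" for t
      have dg: "(g has_vector_derivative c k x t) (at t within {0..1})" if t: "t \<in> {0..1}" for t
      proof -
        have yt: "y x t \<in> V" using yV x t by simp
        have "(w k has_derivative (\<lambda>v. \<Sum>j\<in>UNIV. v$j * pd j (w k) (p0 + t *\<^sub>R (x - p0)))) (at (p0 + t *\<^sub>R (x - p0)))"
          using Dw[OF yt] unfolding y_def .
        then have dw: "((\<lambda>t. w k (p0 + t *\<^sub>R (x - p0))) has_real_derivative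
            (\<Sum>j\<in>UNIV. (x - p0)$j * pd j (w k) (p0 + t *\<^sub>R (x - p0)))) (at t)"
          by (rule dir_deriv)
        have "((\<lambda>t. t * w k (p0 + t *\<^sub>R (x - p0))) has_real_derivative
            (1 * w k (p0 + t *\<^sub>R (x - p0)) + (\<Sum>j\<in>UNIV. (x - p0)$j * pd j (w k) (p0 + t *\<^sub>R (x - p0))) * t)) (at t)"
          by (rule DERIV_mult[OF DERIV_ident dw])
        then have "(g has_real_derivative (1 * w k (y x t) + (\<Sum>j\<in>UNIV. (x - p0)$j * pd j (w k) (y x t)) * t)) (at t)"
          unfolding g_def y_def .
        moreover have "(\<Sum>j\<in>UNIV. (x - p0)$j * pd j (w k) (y x t)) = (\<Sum>i\<in>UNIV. pd k (w i) (y x t) * (x - p0)$i)"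
        proof (rule sum.cong[OF refl])
          fix j
          have "pd j (w k) (y x t) = pd k (w j) (y x t)" by (rule cl) (use yt in \<open>simp add: V_def\<close>)
          then show "(x - p0)$j * pd j (w k) (y x t) = pd k (w j) (y x t) * (x - p0)$j" by simp
        qed
        ultimately have "(g has_real_derivative c k x t) (at t)" by (simp add: c_def mult.commute[of t])
        then show ?thesis
          using has_real_derivative_iff_has_vector_derivative has_field_derivative_at_within by blast
      qed
      have "((\<lambda>t. c k x t) has_integral (g 1 - g 0)) {0..1}"
        by (rule fundamental_theorem_of_calculus) (simp, rule dg)
      moreover have "g 1 - g 0 = w k x" by (simp add: g_def y_def)
      ultimately show ?thesis by (simp add: integral_unique)
    qed
    finally show ?thesis .
  qed
  have dsV: "\<sigma> differentiable_on V"
    unfolding differentiable_on_eq_differentiable_at[OF U] differentiable_def using dsig by blast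
  have "smooth_on V \<sigma>"
  proof (rule smooth_class[OF U, of "insert \<sigma> {h. smooth_on V h}"])
    fix h assume h: "h \<in> insert \<sigma> {h. smooth_on V h}"
    then show "h differentiable_on V" using dsV smooth_diff by auto
    fix k
    show "\<exists>h'\<in>insert \<sigma> {h. smooth_on V h}. \<forall>q\<in>V. pd k h q = h' q"
    proof (cases "h = \<sigma>")
      case True
      then show ?thesis using pdsig sw by (intro bexI[of _ "w k"]) auto
    next
      case False
      then show ?thesis using h smooth_pd by (intro bexI[of _ "pd k h"]) auto
    qed
  qed simp
  then show ?thesis using pdsig unfolding V_def by blast
qed


definition Yv :: "(real^'n \<Rightarrow> real^'n^'n) \<Rightarrow> 'n::finite \<Rightarrow> real^'n \<Rightarrow> real" where
  "Yv M k p = (\<Sum>i\<in>UNIV. \<Sum>j\<in>UNIV. finv M i j p * pd j (fco M i k) p)"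

lemma sum2_lin:
  fixes f a b :: "'a \<Rightarrow> 'b \<Rightarrow> real"
  shows "(\<Sum>i\<in>A. \<Sum>j\<in>B. f i j / d * (u * a i j - v * b i j))
     = (u * (\<Sum>i\<in>A. \<Sum>j\<in>B. f i j * a i j) - v * (\<Sum>i\<in>A. \<Sum>j\<in>B. f i j * b i j)) / d"
proof -
  have "(\<Sum>i\<in>A. \<Sum>j\<in>B. f i j / d * (u * a i j - v * b i j))
     = (\<Sum>i\<in>A. \<Sum>j\<in>B. (u * (f i j * a i j) - v * (f i j * b i j))) / d"
    unfolding sum_divide_distrib by (intro sum.cong refl) (simp add: diff_divide_distrib algebra_simps)
  also have "\<dots> = (u * (\<Sum>i\<in>A. \<Sum>j\<in>B. f i j * a i j) - v * (\<Sum>i\<in>A. \<Sum>j\<in>B. f i j * b i j)) / d"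
    by (simp add: sum_subtractf sum_distrib_left)
  finally show ?thesis .
qed

lemma s_XY: fixes F :: "real^'n::finite \<Rightarrow> real^'n^'n"
  shows "s_cov F k p = (Xv F k p - real CARD('n) * Yv F k p) / ((real CARD('n) + 2) * (1 - real CARD('n)))"
  using sum2_lin[of "\<lambda>i j. finv F i j p" "(real CARD('n) + 2) * (1 - real CARD('n))" 1 "\<lambda>i j. pd k (fco F i j) p"
      "real CARD('n)" "\<lambda>i j. pd j (fco F i k) p" UNIV UNIV]
  by (simp add: s_cov_def Xv_def Yv_def)

lemma c_XY: fixes F :: "real^'n::finite \<Rightarrow> real^'n^'n"
  shows "c_cov F k p = ((real CARD('n) + 3) * Xv F k p - 2 * (real CARD('n) + 1) * Yv F k p)
    / ((real CARD('n) + 2) * (real CARD('n) - 1))"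
  using sum2_lin[of "\<lambda>i j. finv F i j p" "(real CARD('n) + 2) * (real CARD('n) - 1)" "real CARD('n) + 3"
      "\<lambda>i j. pd k (fco F i j) p" "2 * (real CARD('n) + 1)" "\<lambda>i j. pd j (fco F i k) p" UNIV UNIV]
  by (simp add: c_cov_def Xv_def Yv_def mult.assoc)

lemma cs_alg: fixes n X Y :: real assumes n: "n \<ge> 2"
  shows "((n+3)*X - 2*(n+1)*Y)/((n+2)*(n-1)) + (X - n*Y)/((n+2)*(1-n)) = (X - (n+2)*((X - n*Y)/((n+2)*(1-n))))/n"
proof -
  have d: "(n+2)*(n-1) > 0" using n by simp
  have e: "(n+2)*(1-n) = -((n+2)*(n-1))" by (simp add: algebra_simps)
  define d where "d = (n+2)*(n-1)"
  have d0: "d \<noteq> 0" using d by (auto simp: d_def)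
  have n0: "n \<noteq> 0" using n by simp
  have "((n+3)*X - 2*(n+1)*Y)/d + (X - n*Y)/(-d) = (X - (n+2)*((X - n*Y)/(-d)))/n"
    using d0 n0 by (simp add: field_simps) (simp add: d_def algebra_simps)
  then show ?thesis unfolding e d_def .
qed

lemma cs_formula:
  fixes F :: "real^'n::finite \<Rightarrow> real^'n^'n"
  assumes "CARD('n) \<ge> 2"
  shows "c_cov F k p + s_cov F k p = (Xv F k p - (real CARD('n) + 2) * s_cov F k p) / real CARD('n)"
proof -
  define n where "n = real CARD('n)"
  have n: "n \<ge> 2" using assms by (simp add: n_def)
  show ?thesis unfolding s_XY c_XY n_def[symmetric]
    by (rule cs_alg[OF n])
qed

lemma fwd_X:
  fixes G Im :: "real^'n::finite^'n" and D :: "'n \<Rightarrow> 'n \<Rightarrow> 'n \<Rightarrow> real"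
  assumes inv: "Im ** G = mat 1" and sG: "transpose G = G" and ph: "ph \<noteq> 0"
  shows "(\<Sum>i\<in>UNIV. \<Sum>j\<in>UNIV. (Im$i$j / ph) * (dph k * G$i$j + ph * D i j k))
     = real CARD('n) * dph k / ph + (\<Sum>i\<in>UNIV. \<Sum>j\<in>UNIV. Im$i$j * D i j k)"
proof -
  have tr: "(\<Sum>i\<in>UNIV. \<Sum>j\<in>UNIV. Im$i$j * G$i$j) = real CARD('n)"
  proof -
    have "(\<Sum>i\<in>UNIV. \<Sum>j\<in>UNIV. Im$i$j * G$i$j) = trace (Im ** transpose G)"
      using sprod_trace[of Im G] by (simp add: sprod_def)
    also have "\<dots> = real CARD('n)" using sG inv by (simp add: trace_I)
    finally show ?thesis .
  qed
  have "(\<Sum>i\<in>UNIV. \<Sum>j\<in>UNIV. (Im$i$j / ph) * (dph k * G$i$j + ph * D i j k))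
      = (\<Sum>i\<in>UNIV. \<Sum>j\<in>UNIV. (dph k / ph) * (Im$i$j * G$i$j) + Im$i$j * D i j k)"
    using ph by (intro sum.cong refl) (simp add: field_simps)
  also have "\<dots> = (dph k / ph) * (\<Sum>i\<in>UNIV. \<Sum>j\<in>UNIV. Im$i$j * G$i$j) + (\<Sum>i\<in>UNIV. \<Sum>j\<in>UNIV. Im$i$j * D i j k)"
    by (simp add: sum.distrib sum_distrib_left)
  finally show ?thesis using tr by simp
qed

lemma fwd_Y:
  fixes G Im :: "real^'n::finite^'n" and D :: "'n \<Rightarrow> 'n \<Rightarrow> 'n \<Rightarrow> real"
  assumes inv: "Im ** G = mat 1" and sI: "transpose Im = Im" and ph: "ph \<noteq> 0"
    and sD: "\<And>i j k. D i k j = D i j k"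
  shows "(\<Sum>i\<in>UNIV. \<Sum>j\<in>UNIV. (Im$i$j / ph) * (dph j * G$i$k + ph * D i k j))
     = dph k / ph + (\<Sum>i\<in>UNIV. \<Sum>j\<in>UNIV. Im$i$j * D i j k)"
proof -
  have delta: "(\<Sum>i\<in>UNIV. Im$i$j * G$i$k) = (if j = k then 1 else 0)" for j
  proof -
    have "(\<Sum>i\<in>UNIV. Im$i$j * G$i$k) = (Im ** G) $ j $ k"
    proof -
      have "Im$i$j = Im$j$i" for i using arg_cong[OF sI, of "\<lambda>A. A$j$i"] by (simp add: transpose_def)
      then show ?thesis by (simp add: mat_entry_eq)
    qed
    then show ?thesis using inv by (simp add: mat_def)
  qed
  have "(\<Sum>i\<in>UNIV. \<Sum>j\<in>UNIV. (Im$i$j / ph) * (dph j * G$i$k + ph * D i k j))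
      = (\<Sum>i\<in>UNIV. \<Sum>j\<in>UNIV. (dph j / ph) * (Im$i$j * G$i$k) + Im$i$j * D i j k)"
    using ph by (intro sum.cong refl) (simp add: field_simps sD)
  also have "\<dots> = (\<Sum>j\<in>UNIV. (dph j / ph) * (\<Sum>i\<in>UNIV. Im$i$j * G$i$k)) + (\<Sum>i\<in>UNIV. \<Sum>j\<in>UNIV. Im$i$j * D i j k)"
    by (simp add: sum.distrib sum_distrib_left) (rule sum.swap)
  also have "(\<Sum>j\<in>UNIV. (dph j / ph) * (\<Sum>i\<in>UNIV. Im$i$j * G$i$k)) = dph k / ph"
    by (simp add: delta if_distrib cong: if_cong)
  finally show ?thesis .
qed

lemma det_scale:
  fixes A :: "real^'n::finite^'n"
  shows "det (c *\<^sub>R A) = c ^ CARD('n) * det A"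
  by (simp add: det_def prod.distrib sum_distrib_left mult.left_commute)


lemma smooth_div_const: "open U \<Longrightarrow> smooth_on U a \<Longrightarrow> smooth_on U (\<lambda>p. a p / c)"
proof -
  assume U: "open U" and a: "smooth_on U a"
  have "smooth_on U (\<lambda>p. inverse c * a p)" by (rule smooth_cmult[OF U a])
  then show ?thesis by (simp add: divide_inverse mult.commute)
qed

lemma pd_lin2:
  assumes "a differentiable (at p)" "b differentiable (at p)"
  shows "pd k (\<lambda>q. (a q - c * b q) / d) p = (pd k a p - c * pd k b p) / d"
proof -
  have db: "(\<lambda>q. c * b q) differentiable (at p)" using assms(2) by (simp add: differentiable_mult)
  have dd: "(\<lambda>q. a q - c * b q) differentiable (at p)" using assms(1) db by (simp add: differentiable_diff)
  have "pd k (\<lambda>q. inverse d * (a q - c * b q)) p = inverse d * pd k (\<lambda>q. a q - c * b q) p"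
    by (rule pd_cmult[OF dd])
  also have "pd k (\<lambda>q. a q - c * b q) p = pd k a p - pd k (\<lambda>q. c * b q) p"
    by (rule pd_diff[OF assms(1) db])
  also have "pd k (\<lambda>q. c * b q) p = c * pd k b p" by (rule pd_cmult[OF assms(2)])
  finally show ?thesis by (simp add: divide_inverse mult.commute)
qed

lemma smooth_s:
  fixes F :: "real^'n::finite \<Rightarrow> real^'n^'n"
  assumes U: "open U" and F: "\<And>i j. smooth_on U (fco F i j)" and nd: "\<And>p. p \<in> U \<Longrightarrow> det (F p) \<noteq> 0"
  shows "smooth_on U (s_cov F k)"
proof -
  have "smooth_on U (\<lambda>p. \<Sum>i\<in>UNIV. \<Sum>j\<in>UNIV.
     finv F i j p / ((real CARD('n) + 2) * (1 - real CARD('n))) *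
     (pd k (fco F i j) p - real CARD('n) * pd j (fco F i k) p))"
    by (intro smooth_sum[OF U] smooth_mult[OF U] smooth_div_const[OF U] smooth_finv[OF U F nd]
        smooth_minus[OF U] smooth_cmult[OF U] smooth_pd F) auto
  moreover have "(\<lambda>p. \<Sum>i\<in>UNIV. \<Sum>j\<in>UNIV.
     finv F i j p / ((real CARD('n) + 2) * (1 - real CARD('n))) *
     (pd k (fco F i j) p - real CARD('n) * pd j (fco F i k) p)) = s_cov F k"
    by (rule ext) (simp add: s_cov_def)
  ultimately show ?thesis by simp
qed

lemma converse:
  fixes F :: "real^'n::finite \<Rightarrow> real^'n^'n"
  assumes n2: "CARD('n) \<ge> 2" and U: "open U"
    and smooth: "\<And>i j. smooth_on U (fco F i j)"
    and symm: "\<And>p i j. p \<in> U \<Longrightarrow> F p $ i $ j = F p $ j $ i"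
    and nondeg: "\<And>p. p \<in> U \<Longrightarrow> det (F p) \<noteq> 0"
    and asym: "\<forall>p\<in>U. \<forall>i j k. a_ten F i j k p = a_ten F j i k p \<and> a_ten F i j k p = a_ten F i k j p"
    and sclos: "\<forall>p\<in>U. \<forall>i j. pd j (s_cov F i) p = pd i (s_cov F j) p"
    and p0: "p0 \<in> U"
  shows "\<exists>V. open V \<and> p0 \<in> V \<and> V \<subseteq> U \<and> lagrangian_on V F"
proof -
  define n where "n = real CARD('n)"
  obtain r where r: "r > 0" "ball p0 r \<subseteq> U" using U p0 open_contains_ball by blast
  define V where "V = ball p0 r"
  have V: "open V" "V \<subseteq> U" "p0 \<in> V" using r by (auto simp: V_def)
  have fsym: "fco F i j p = fco F j i p" if "p \<in> U" for i j p using symm[OF that] by (simp add: fco_def)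
  have ss: "smooth_on U (s_cov F k)" for k by (rule smooth_s[OF U smooth nondeg])
  have sX: "smooth_on U (Xv F k)" for k by (rule smooth_Xv[OF U smooth nondeg])
  define w where "w k p = (Xv F k p - (n + 2) * s_cov F k p) / n" for k p
  have swU: "smooth_on U (w k)" for k
    unfolding w_def[abs_def]
    by (intro smooth_div_const[OF U] smooth_minus[OF U] smooth_cmult[OF U] sX ss)
  have sw: "smooth_on (ball p0 r) (w k)" for k using smooth_subset[OF swU r(2)] .
  have wcl: "pd j (w i) p = pd i (w j) p" if "p \<in> ball p0 r" for p i j
  proof -
    have pU: "p \<in> U" using that r by auto
    have e: "pd l (w k) p = (pd l (Xv F k) p - (n + 2) * pd l (s_cov F k) p) / n" for k l
      unfolding w_def by (rule pd_lin2) (auto intro: smooth_diff_at[OF U _ pU] sX ss)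
    show ?thesis unfolding e using X_closed[OF U smooth nondeg symm pU] sclos pU by simp
  qed
  obtain \<psi> where psi: "smooth_on (ball p0 r) \<psi>" "\<forall>p\<in>ball p0 r. \<forall>k. pd k \<psi> p = w k p"
    using poincare[OF r(1) sw wcl] by blast
  have sps: "smooth_on V \<psi>" using psi by (simp add: V_def)
  have dps: "pd k \<psi> p = w k p" if "p \<in> V" for k p using psi that by (simp add: V_def)
  have cs: "c_cov F k p = w k p - s_cov F k p" if "p \<in> U" for k p
    using cs_formula[OF n2, of F k p] by (simp add: w_def n_def)
  define E where "E p = exp (- \<psi> p)" for p
  have sE: "smooth_on V E"
  proof -
    have "smooth_on V (\<lambda>p. exp ((-1) * \<psi> p))" by (intro smooth_exp[OF V(1)] smooth_cmult[OF V(1)] sps)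
    then show ?thesis by (simp add: E_def[abs_def])
  qed
  have pdE: "pd k E p = - E p * w k p" if "p \<in> V" for k p
  proof -
    have d: "(\<lambda>q. (-1) * \<psi> q) differentiable (at p)"
      using smooth_diff_at[OF V(1) sps that] by (simp add: differentiable_mult)
    have "pd k (\<lambda>q. exp ((-1) * \<psi> q)) p = exp ((-1) * \<psi> p) * pd k (\<lambda>q. (-1) * \<psi> q) p"
      by (rule pd_exp[OF d])
    also have "pd k (\<lambda>q. (-1) * \<psi> q) p = (-1) * pd k \<psi> p"
      by (rule pd_cmult[OF smooth_diff_at[OF V(1) sps that]])
    finally show ?thesis using dps[OF that] by (simp add: E_def[abs_def])
  qed
  define h where "h i j p = E p * fco F i j p" for i j p
  have sh: "smooth_on V (h i j)" for i j
    unfolding h_def[abs_def] by (intro smooth_mult[OF V(1)] sE smooth_subset[OF smooth V(2)])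
  have hsym: "h i j p = h j i p" if "p \<in> V" for i j p
    using fsym[of p i j] that V by (auto simp: h_def)
  have pdh: "pd k (h i j) p = E p * (a_ten F i j k p + s_cov F k p * fco F i j p
      + s_cov F i p * fco F k j p + s_cov F j p * fco F k i p)" if "p \<in> V" for i j k p
  proof -
    have pU: "p \<in> U" using that V by auto
    have "pd k (h i j) p = pd k E p * fco F i j p + E p * pd k (fco F i j) p"
      unfolding h_def by (rule pd_mult) (auto intro: smooth_diff_at[OF V(1) _ that] sE smooth_diff_at[OF U _ pU] smooth)
    also have "\<dots> = E p * (pd k (fco F i j) p - w k p * fco F i j p)"
      using pdE[OF that] by (simp add: algebra_simps)
    also have "pd k (fco F i j) p = a_ten F i j k p + (c_cov F k p + 2 * s_cov F k p) * fco F i j p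
        + s_cov F i p * fco F k j p + s_cov F j p * fco F k i p"
      by (simp add: a_ten_def)
    finally show ?thesis using cs[OF pU, of k] by (simp add: algebra_simps)
  qed
  have hcl: "pd k (h i j) p = pd j (h i k) p" if "p \<in> V" for i j k p
  proof -
    have pU: "p \<in> U" using that V by auto
    have "a_ten F i j k p = a_ten F i k j p" using asym pU by blast
    then show ?thesis unfolding pdh[OF that] using fsym[OF pU] by (simp add: algebra_simps)
  qed
  have "\<forall>i. \<exists>\<sigma>. smooth_on (ball p0 r) \<sigma> \<and> (\<forall>p\<in>ball p0 r. \<forall>j. pd j \<sigma> p = h i j p)"
  proof
    fix i
    show "\<exists>\<sigma>. smooth_on (ball p0 r) \<sigma> \<and> (\<forall>p\<in>ball p0 r. \<forall>j. pd j \<sigma> p = h i j p)"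
    proof (rule poincare[OF r(1)])
      show "smooth_on (ball p0 r) (h i j)" for j using sh by (simp add: V_def)
      show "pd j (h i a) p = pd a (h i j) p" if "p \<in> ball p0 r" for p a j
        using hcl[where i=i and j=a and k=j and p=p] that by (simp add: V_def)
    qed
  qed
  then obtain \<sigma> where sig: "\<And>i. smooth_on (ball p0 r) (\<sigma> i)" "\<And>i. \<forall>p\<in>ball p0 r. \<forall>j. pd j (\<sigma> i) p = h i j p"
    by metis
  obtain G where G: "smooth_on (ball p0 r) G" "\<forall>p\<in>ball p0 r. \<forall>i. pd i G p = \<sigma> i p"
  proof -
    have "\<exists>G. smooth_on (ball p0 r) G \<and> (\<forall>p\<in>ball p0 r. \<forall>i. pd i G p = \<sigma> i p)"
    proof (rule poincare[OF r(1) sig(1)])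
      show "pd j (\<sigma> i) p = pd i (\<sigma> j) p" if "p \<in> ball p0 r" for p i j
        using sig(2) that hsym[of p i j] by (simp add: V_def)
    qed
    then show ?thesis using that by blast
  qed
  have "lagrangian_on V F"
    unfolding lagrangian_on_def
  proof (intro exI conjI ballI allI)
    show "smooth_on V G" using G by (simp add: V_def)
    show "exp (\<psi> p) \<noteq> 0" for p by simp
    fix p i j assume p: "p \<in> V"
    have "pd i (pd j G) p = pd i (\<sigma> j) p"
      by (rule pd_local[OF V(1) p]) (use G in \<open>simp add: V_def\<close>)
    also have "\<dots> = h j i p" using sig(2) p by (simp add: V_def)
    also have "\<dots> = h i j p" using hsym p by simp
    finally show "fco F i j p = exp (\<psi> p) * pd i (pd j G) p"
      by (simp add: h_def E_def exp_minus)
  qed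
  then show ?thesis using V by blast
qed


lemma scale_mult_mat:
  fixes A B :: "real^'n::finite^'n"
  shows "(c *\<^sub>R A) ** (d *\<^sub>R B) = (c * d) *\<^sub>R (A ** B)"
  by (simp add: vec_eq_iff matrix_matrix_mult_def sum_distrib_left algebra_simps)

lemma forward:
  fixes F :: "real^'n::finite \<Rightarrow> real^'n^'n"
  assumes n2: "CARD('n) \<ge> 2"
    and smooth: "\<And>i j. smooth_on U (fco F i j)"
    and nondeg: "\<And>p. p \<in> U \<Longrightarrow> det (F p) \<noteq> 0"
    and V: "open V" "p \<in> V" "V \<subseteq> U" and lag: "lagrangian_on V F"
  shows "(\<forall>i j k. a_ten F i j k p = a_ten F j i k p \<and> a_ten F i j k p = a_ten F i k j p)
      \<and> (\<forall>i j. pd j (s_cov F i) p = pd i (s_cov F j) p)"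
proof -
  define n where "n = real CARD('n)"
  have n: "n \<ge> 2" using n2 by (simp add: n_def)
  obtain g \<phi> where g: "smooth_on V g" and ph0: "\<And>q. q \<in> V \<Longrightarrow> \<phi> q \<noteq> 0"
    and fg: "\<And>q i j. q \<in> V \<Longrightarrow> fco F i j q = \<phi> q * pd i (pd j g) q"
    using lag unfolding lagrangian_on_def by blast
  define Gm where "Gm q = (\<chi> i j. pd i (pd j g) q)" for q
  have fG: "fco Gm i j = pd i (pd j g)" for i j by (rule ext) (simp add: fco_def Gm_def)
  have sG: "smooth_on V (fco Gm i j)" for i j unfolding fG by (intro smooth_pd g)
  have FG: "F q = \<phi> q *\<^sub>R Gm q" if "q \<in> V" for q
    using fg[OF that] by (simp add: vec_eq_iff fco_def Gm_def)
  have fF: "fco F i j q = \<phi> q * fco Gm i j q" if "q \<in> V" for q i j using fg[OF that] fG by simp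
  have symG: "Gm q $ i $ j = Gm q $ j $ i" if "q \<in> V" for q i j
    using schwarz[OF V(1) g that] by (simp add: Gm_def)
  have detG: "det (Gm q) \<noteq> 0" if "q \<in> V" for q
    using nondeg[of q] that V FG[OF that] det_scale[of "\<phi> q" "Gm q"] by auto
  have invF: "matrix_inv (F q) = (1 / \<phi> q) *\<^sub>R matrix_inv (Gm q)" if q: "q \<in> V" for q
  proof (rule inv_unique)
    show "det (F q) \<noteq> 0" using nondeg q V by auto
    show "(1 / \<phi> q) *\<^sub>R matrix_inv (Gm q) ** F q = mat 1"
      unfolding FG[OF q] scale_mult_mat using ph0[OF q] inv_props(2)[OF detG[OF q]] by simp
  qed
  have finvF: "finv F i j q = finv Gm i j q / \<phi> q" if "q \<in> V" for q i j
    using invF[OF that] by (simp add: finv_def)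
  have phid: "\<phi> differentiable (at q)" if q: "q \<in> V" for q
  proof -
    have "Gm q \<noteq> 0" using detG[OF q] det_0 mat_0 by metis
    then obtain a b where ab: "Gm q $ a $ b \<noteq> 0" by (auto simp: vec_eq_iff)
    have "continuous (at q) (fco Gm a b)"
      using smooth_diff_at[OF V(1) sG q] differentiable_imp_continuous_within by blast
    then obtain e where e: "e > 0" "\<And>z. dist z q < e \<Longrightarrow> dist (fco Gm a b z) (fco Gm a b q) < \<bar>Gm q $ a $ b\<bar>"
      using ab unfolding continuous_at_eps_delta by (metis zero_less_abs_iff)
    obtain e2 where e2: "e2 > 0" "ball q e2 \<subseteq> V" using V(1) q open_contains_ball by blast
    define W where "W = ball q (min e e2)"
    have W: "open W" "q \<in> W" "W \<subseteq> V" using e e2 by (auto simp: W_def)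
    have nz: "fco Gm a b z \<noteq> 0" if "z \<in> W" for z
    proof
      assume "fco Gm a b z = 0"
      moreover have "dist z q < e" using that by (auto simp: W_def dist_commute)
      ultimately show False using e(2)[of z] by (simp add: fco_def dist_real_def)
    qed
    have WU: "W \<subseteq> U" using W V by auto
    have "smooth_on W (\<lambda>z. fco F a b z / fco Gm a b z)"
      by (rule smooth_divide[OF W(1) smooth_subset[OF smooth WU] smooth_subset[OF sG W(3)]]) (use nz in auto)
    then have "(\<lambda>z. fco F a b z / fco Gm a b z) differentiable (at q)" using smooth_diff_at[OF W(1) _ W(2)] by blast
    then obtain D where D: "((\<lambda>z. fco F a b z / fco Gm a b z) has_derivative D) (at q)"
      unfolding differentiable_def by blast
    have "(\<phi> has_derivative D) (at q)"
    proof (rule has_derivative_transform_within_open[OF D W(1,2)])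
      fix z assume z: "z \<in> W"
      then show "fco F a b z / fco Gm a b z = \<phi> z" using fF[of z a b] W nz[OF z] by auto
    qed
    then show ?thesis unfolding differentiable_def by blast
  qed
  have pdF: "pd k (fco F i j) q = pd k \<phi> q * fco Gm i j q + \<phi> q * pd k (fco Gm i j) q"
    if q: "q \<in> V" for q i j k
  proof -
    have "pd k (fco F i j) q = pd k (\<lambda>z. \<phi> z * fco Gm i j z) q"
      by (rule pd_local[OF V(1) q]) (simp add: fF)
    also have "\<dots> = pd k \<phi> q * fco Gm i j q + \<phi> q * pd k (fco Gm i j) q"
      by (rule pd_mult[OF phid[OF q] smooth_diff_at[OF V(1) sG q]])
    finally show ?thesis .
  qed
  define D where "D q i j k = pd k (fco Gm i j) q" for q i j k
  have D1: "D q i j k = D q j i k" if q: "q \<in> V" for q i j k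
    unfolding D_def by (rule pd_local[OF V(1) q]) (simp add: fco_def symG)
  have D2: "D q i j k = D q k j i" if q: "q \<in> V" for q i j k
    unfolding D_def fG by (rule schwarz[OF V(1) smooth_pd[OF g] q])
  have D3: "D q i k j = D q i j k" if q: "q \<in> V" for q i j k
    using D1[OF q] D2[OF q] by metis
  have tG: "transpose (Gm q) = Gm q" if "q \<in> V" for q
    using symG[OF that] by (simp add: vec_eq_iff transpose_def)
  have tI: "transpose (matrix_inv (Gm q)) = matrix_inv (Gm q)" if "q \<in> V" for q
    by (rule inv_symm[OF detG[OF that] tG[OF that]])
  have XF: "Xv F k q = n * pd k \<phi> q / \<phi> q + Xv Gm k q" if q: "q \<in> V" for q k
  proof -
    have "Xv F k q = (\<Sum>i\<in>UNIV. \<Sum>j\<in>UNIV. (matrix_inv (Gm q)$i$j / \<phi> q) *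
        (pd k \<phi> q * Gm q$i$j + \<phi> q * D q i j k))"
      unfolding Xv_def using finvF[OF q] pdF[OF q] by (simp add: D_def finv_def fco_def)
    also have "\<dots> = n * pd k \<phi> q / \<phi> q + (\<Sum>i\<in>UNIV. \<Sum>j\<in>UNIV. matrix_inv (Gm q)$i$j * D q i j k)"
      unfolding n_def by (rule fwd_X[OF inv_props(2)[OF detG[OF q]] tG[OF q] ph0[OF q]])
    finally show ?thesis by (simp add: Xv_def D_def finv_def)
  qed
  have YF: "Yv F k q = pd k \<phi> q / \<phi> q + Xv Gm k q" if q: "q \<in> V" for q k
  proof -
    have "Yv F k q = (\<Sum>i\<in>UNIV. \<Sum>j\<in>UNIV. (matrix_inv (Gm q)$i$j / \<phi> q) *
        (pd j \<phi> q * Gm q$i$k + \<phi> q * D q i k j))"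
      unfolding Yv_def using finvF[OF q] pdF[OF q] by (simp add: D_def finv_def fco_def)
    also have "\<dots> = pd k \<phi> q / \<phi> q + (\<Sum>i\<in>UNIV. \<Sum>j\<in>UNIV. matrix_inv (Gm q)$i$j * D q i j k)"
      by (rule fwd_Y[OF inv_props(2)[OF detG[OF q]] tI[OF q] ph0[OF q] D3[OF q]])
    finally show ?thesis by (simp add: Xv_def D_def finv_def)
  qed
  have sF: "s_cov F k q = Xv Gm k q / (n + 2)" if q: "q \<in> V" for q k
  proof -
    have "n \<noteq> 1" "n + 2 \<noteq> 0" using n by auto
    moreover have nn: "n * n \<ge> 4" using n mult_mono[of 2 n 2 n] by simp
    then have "2 - (n + n * n) \<noteq> 0" using n by linarith
    ultimately show ?thesis unfolding s_XY n_def[symmetric] XF[OF q] YF[OF q]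
      by (simp add: field_simps)
  qed
  have c2s: "c_cov F k q + 2 * s_cov F k q = pd k \<phi> q / \<phi> q + s_cov F k q" if q: "q \<in> V" for q k
  proof -
    have "c_cov F k q + s_cov F k q = (Xv F k q - (n + 2) * s_cov F k q) / n"
      using cs_formula[OF n2] by (simp add: n_def)
    also have "\<dots> = pd k \<phi> q / \<phi> q"
    proof -
      have h1: "(n + 2) * (Xv Gm k q / (n + 2)) = Xv Gm k q" using n by simp
      have "n \<noteq> 0" using n by simp
      then show ?thesis unfolding XF[OF q] sF[OF q] h1 by simp
    qed
    finally show ?thesis by simp
  qed
  have pU: "p \<in> U" using V by auto
  define s where "s k = s_cov F k p" for k
  have aval: "a_ten F i j k p = \<phi> p * (D p i j k - s k * Gm p$i$j - s i * Gm p$k$j - s j * Gm p$k$i)" for i j k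
  proof -
    have "a_ten F i j k p = pd k (fco F i j) p - (pd k \<phi> p / \<phi> p + s k) * fco F i j p
        - s i * fco F k j p - s j * fco F k i p"
      unfolding a_ten_def s_def using c2s[OF V(2)] by simp
    also have "\<dots> = \<phi> p * (D p i j k - s k * Gm p$i$j - s i * Gm p$k$j - s j * Gm p$k$i)"
      unfolding pdF[OF V(2)] fF[OF V(2)] using ph0[OF V(2)]
      by (simp add: D_def fco_def field_simps)
    finally show ?thesis .
  qed
  have part1: "a_ten F i j k p = a_ten F j i k p \<and> a_ten F i j k p = a_ten F i k j p" for i j k
    unfolding aval using D1[OF V(2)] D3[OF V(2)] symG[OF V(2)] by (simp add: algebra_simps)
  have sX: "smooth_on V (Xv Gm k)" for k by (rule smooth_Xv[OF V(1) sG detG])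
  have part2: "pd j (s_cov F i) p = pd i (s_cov F j) p" for i j
  proof -
    have e: "pd l (s_cov F k) p = pd l (Xv Gm k) p / (n + 2)" for k l
    proof -
      have "pd l (s_cov F k) p = pd l (\<lambda>q. (Xv Gm k q - 0 * Xv Gm k q) / (n + 2)) p"
        by (rule pd_local[OF V(1,2)]) (simp add: sF)
      also have "\<dots> = (pd l (Xv Gm k) p - 0 * pd l (Xv Gm k) p) / (n + 2)"
        by (rule pd_lin2) (auto intro: smooth_diff_at[OF V(1) sX V(2)])
      finally show ?thesis by simp
    qed
    show ?thesis unfolding e
      using X_closed[OF V(1) sG detG _ V(2)] symG by (simp add: fco_def)
  qed
  show ?thesis using part1 part2 by blast
qed


theorem proposition2:
  fixes F :: "real^'n \<Rightarrow> real^'n^'n" and U :: "(real^'n) set"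
  assumes n2: "CARD('n) \<ge> 2"
    and U: "open U" "U \<noteq> {}"
    and smooth: "\<And>i j. smooth_on U (fco F i j)"
    and symm: "\<And>p i j. p \<in> U \<Longrightarrow> F p $ i $ j = F p $ j $ i"
    and nondeg: "\<And>p. p \<in> U \<Longrightarrow> det (F p) \<noteq> 0"
  shows "(\<forall>p0\<in>U. \<exists>V. open V \<and> p0 \<in> V \<and> V \<subseteq> U \<and> lagrangian_on V F)
     \<longleftrightarrow> ((\<forall>p\<in>U. \<forall>i j k. a_ten F i j k p = a_ten F j i k p \<and> a_ten F i j k p = a_ten F i k j p)
          \<and> (\<forall>p\<in>U. \<forall>i j. pd j (s_cov F i) p = pd i (s_cov F j) p))"
proof
  assume L: "\<forall>p0\<in>U. \<exists>V. open V \<and> p0 \<in> V \<and> V \<subseteq> U \<and> lagrangian_on V F"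
  have fw: "(\<forall>i j k. a_ten F i j k p = a_ten F j i k p \<and> a_ten F i j k p = a_ten F i k j p)
      \<and> (\<forall>i j. pd j (s_cov F i) p = pd i (s_cov F j) p)" if p: "p \<in> U" for p
  proof -
    obtain V where V: "open V" "p \<in> V" "V \<subseteq> U" "lagrangian_on V F" using L p by blast
    show ?thesis by (rule forward[OF n2 smooth nondeg V])
  qed
  show "(\<forall>p\<in>U. \<forall>i j k. a_ten F i j k p = a_ten F j i k p \<and> a_ten F i j k p = a_ten F i k j p)
          \<and> (\<forall>p\<in>U. \<forall>i j. pd j (s_cov F i) p = pd i (s_cov F j) p)"
    using fw by blast
next
  assume R: "(\<forall>p\<in>U. \<forall>i j k. a_ten F i j k p = a_ten F j i k p \<and> a_ten F i j k p = a_ten F i k j p)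
          \<and> (\<forall>p\<in>U. \<forall>i j. pd j (s_cov F i) p = pd i (s_cov F j) p)"
  show "\<forall>p0\<in>U. \<exists>V. open V \<and> p0 \<in> V \<and> V \<subseteq> U \<and> lagrangian_on V F"
  proof
    fix p0 assume p0: "p0 \<in> U"
    show "\<exists>V. open V \<and> p0 \<in> V \<and> V \<subseteq> U \<and> lagrangian_on V F"
      by (rule converse[OF n2 U(1) smooth symm nondeg]) (use R p0 in auto)
  qed
qed

end
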